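(* Let $n>0$, $X\sim N(\theta,\frac1n)$ and $\tau\ge1$. Set $\mu_0=E_0\{(X^2-\frac{\tau}{n})_+\}$, where the expectation is taken under $\theta=0$, and let $\hat Q=(X^2-\frac{\tau}{n})_+-\mu_0$. Then $$|\mu_0|\le\frac{4}{\sqrt{2\pi}\,n\,\tau^{1/2}e^{\tau/2}},\qquad |E_\theta\hat Q-\theta^2|\le\min\Big(\frac{2\tau}{n},\theta^2\Big),$$ and $$\mathrm{Var}(\hat Q)\le\frac{6\theta^2}{n}+\frac{4\tau^{1/2}+18}{n^2e^{\tau/2}}.$$
   Context: $(x)_+=\max(x,0)$. *)

theory Defs
  imports "HOL-Probability.Probability"
begin

definition normal_law :: "real \<Rightarrow> real \<Rightarrow> real measure" where
  "normal_law \<theta> n = density lborel (normal_density \<theta> (1 / sqrt n))"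

definition pos_part :: "real \<Rightarrow> real" where
  "pos_part x = max x 0"

end

theory Submission
  imports Defs "HOL-Real_Asymp.Real_Asymp"
begin
abbreviation "phi \<equiv> std_normal_density"

lemma phi_int_bound:
  fixes f :: "real \<Rightarrow> real"
  assumes [measurable]: "f \<in> borel_measurable borel" and b: "\<And>z. \<bar>f z\<bar> \<le> A + B * z^4"
  shows "integrable lborel (\<lambda>z. phi z * f z)"
proof (rule Bochner_Integration.integrable_bound[where f="\<lambda>z. A * (phi z * z^0) + B * (phi z * z^4)"])
  show "integrable lborel (\<lambda>z. A * (phi z * z^0) + B * (phi z * z^4))"
    using integrable_std_normal_moment[of 0] integrable_std_normal_moment[of 4] by auto
  show "AE z in lborel. norm (phi z * f z) \<le> norm (A * (phi z * z^0) + B * (phi z * z^4))"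
  proof (intro AE_I2)
    fix z
    have "0 \<le> A + B * z^4" using b[of z] by linarith
    have "norm (phi z * f z) = phi z * \<bar>f z\<bar>" by (simp add: abs_mult)
    also have "\<dots> \<le> phi z * (A + B * z^4)" using b[of z] by (intro mult_left_mono) auto
    also have "\<dots> = norm (A * (phi z * z^0) + B * (phi z * z^4))"
    proof -
      have "0 \<le> phi z * (A + B * z^4)" using \<open>0 \<le> A + B * z^4\<close> by simp
      then show ?thesis by (simp add: algebra_simps)
    qed
    finally show "norm (phi z * f z) \<le> norm (A * (phi z * z^0) + B * (phi z * z^4))" .
  qed
qed simp

lemma phi_int_1: "(\<integral>z. phi z \<partial>lborel) = 1" by simp

lemma phi_mom2: "(\<integral>z. phi z * z^2 \<partial>lborel) = 1"
  using integral_std_normal_moment_even[of 1] by simp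
lemma phi_mom4: "(\<integral>z. phi z * z^4 \<partial>lborel) = 3"
  using integral_std_normal_moment_even[of 2] by (simp add: fact_numeral)
lemma phi_mom1: "(\<integral>z. phi z * z \<partial>lborel) = 0"
  using integral_std_normal_moment_odd[of 0] by simp
lemma phi_mom3: "(\<integral>z. phi z * z^3 \<partial>lborel) = 0"
  using integral_std_normal_moment_odd[of 1] by simp

lemma shift_int: "(\<integral>y. normal_density b 1 y * H y \<partial>lborel) = (\<integral>z. phi z * H (b + z) \<partial>lborel)"
  using lborel_integral_real_affine[of 1 "\<lambda>y. normal_density b 1 y * H y" b]
  by (simp add: normal_density_def)

lemma shift_integrable: "integrable lborel (\<lambda>y. normal_density b 1 y * H y) \<longleftrightarrow> integrable lborel (\<lambda>z. phi z * H (b + z))"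
  using lborel_integrable_real_affine_iff[of 1 "\<lambda>y. normal_density b 1 y * H y" b]
  by (simp add: normal_density_def)

lemma reflect_int: "(\<integral>y. f y \<partial>lborel) = (\<integral>y. f (- y) \<partial>lborel)" for f :: "real \<Rightarrow> real"
  using lborel_integral_real_affine[of "-1" f 0] by simp

lemma reflect_integrable: "integrable lborel f \<longleftrightarrow> integrable lborel (\<lambda>y. f (- y))" for f :: "real \<Rightarrow> real"
  using lborel_integrable_real_affine_iff[of "-1" f 0] by simp

lemma nd_expand: "normal_density b 1 y = phi y * exp (b * y - b^2/2)"
proof -
  have e: "-(y - b)\<^sup>2 / 2 = - y\<^sup>2 / 2 + (b * y - b^2/2)"
    by (simp add: power2_eq_square field_simps)
  have "exp (-(y - b)\<^sup>2 / 2) = exp (- y\<^sup>2 / 2) * exp (b * y - b^2/2)"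
    unfolding e exp_add ..
  then show ?thesis by (simp add: normal_density_def std_normal_density_def)
qed

lemma nd_combo: "normal_density a 1 y + normal_density (-a) 1 y - 2 * normal_density 0 1 y
   = 2 * phi y * (exp (-(a^2)/2) * cosh (a * y) - 1)"
proof -
  have "exp (a * y - a^2/2) = exp (-(a^2)/2) * exp (a*y)" "exp (-a * y - a^2/2) = exp (-(a^2)/2) * exp (-(a*y))"
    by (simp_all add: exp_add[symmetric])
  then show ?thesis
    unfolding nd_expand[of a] nd_expand[of "-a"] using nd_expand[of 0 y]
    by (simp add: cosh_def algebra_simps)
qed

lemma pair_pointwise:
  fixes H :: "real \<Rightarrow> real"
  assumes mono: "\<And>y y'. \<bar>y\<bar> \<le> \<bar>y'\<bar> \<Longrightarrow> H y \<le> H y'"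
  shows "\<exists>c. \<forall>y. 0 \<le> (H y - c) * (normal_density a 1 y + normal_density (-a) 1 y - 2 * normal_density 0 1 y)"
proof (cases "a = 0")
  case True then show ?thesis by simp
next
  case False
  define K where "K = exp (a^2/2)"
  have K1: "K \<ge> 1" unfolding K_def by simp
  define y0 where "y0 = arcosh K / \<bar>a\<bar>"
  have y0nn: "y0 \<ge> 0" unfolding y0_def using K1 by simp
  have cy0: "cosh (\<bar>a\<bar> * y0) = K" unfolding y0_def using False K1 by simp
  show ?thesis
  proof (intro exI allI)
    fix y
    have sgn: "exp (-(a^2)/2) * cosh (a * y) - 1 \<ge> 0 \<longleftrightarrow> \<bar>y\<bar> \<ge> y0"
    proof -
      have cc: "cosh (a * y) = cosh (\<bar>a\<bar> * \<bar>y\<bar>)"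
        by (metis abs_mult cosh_real_abs)
      have "exp (-(a^2)/2) * cosh (a * y) - 1 \<ge> 0 \<longleftrightarrow> cosh (\<bar>a\<bar> * \<bar>y\<bar>) \<ge> K"
        unfolding K_def cc by (simp add: exp_minus field_simps)
      also have "cosh (\<bar>a\<bar> * \<bar>y\<bar>) \<ge> K \<longleftrightarrow> \<bar>a\<bar> * \<bar>y\<bar> \<ge> \<bar>a\<bar> * y0"
        using cy0 cosh_real_nonneg_le_iff[of "\<bar>a\<bar> * y0" "\<bar>a\<bar> * \<bar>y\<bar>"] y0nn by simp
      also have "\<dots> \<longleftrightarrow> \<bar>y\<bar> \<ge> y0" using False by simp
      finally show ?thesis .
    qed
    show "0 \<le> (H y - H y0) * (normal_density a 1 y + normal_density (-a) 1 y - 2 * normal_density 0 1 y)"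
    proof (cases "\<bar>y\<bar> \<ge> y0")
      case True
      then have "H y0 \<le> H y" using mono[of y0 y] y0nn by simp
      moreover have "0 \<le> exp (-(a^2)/2) * cosh (a * y) - 1" using sgn True by simp
      ultimately show ?thesis unfolding nd_combo by simp
    next
      case False
      then have "H y \<le> H y0" using mono[of y y0] y0nn by simp
      moreover have "exp (-(a^2)/2) * cosh (a * y) - 1 \<le> 0" using sgn False by simp
      ultimately show ?thesis unfolding nd_combo
        by (intro mult_nonpos_nonpos) (auto intro: mult_nonneg_nonpos)
    qed
  qed
qed

lemma nd_refl: "normal_density (-a) 1 (-y) = normal_density a 1 y"
proof -
  have "(-y - -a)^2 = (y - a)^2" by (simp add: power2_eq_square algebra_simps)
  then show ?thesis by (simp add: normal_density_def)
qed

lemma hb_nd: "has_bochner_integral lborel (normal_density b 1) 1"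
  using has_bochner_integral_integrable[of lborel "normal_density b 1"] by simp

lemma pairing:
  fixes H :: "real \<Rightarrow> real" and a :: real
  assumes [measurable]: "H \<in> borel_measurable borel"
    and even: "\<And>y. H (-y) = H y"
    and mono: "\<And>y y'. \<bar>y\<bar> \<le> \<bar>y'\<bar> \<Longrightarrow> H y \<le> H y'"
    and intH: "\<And>b. integrable lborel (\<lambda>z. phi z * H (b + z))"
  shows "(\<integral>z. phi z * H z \<partial>lborel) \<le> (\<integral>z. phi z * H (a + z) \<partial>lborel)"
proof -
  define N where "N = (\<lambda>b y. normal_density b 1 y)"
  define I where "I = (\<lambda>b. \<integral>y. N b y * H y \<partial>lborel)"
  have intN: "integrable lborel (\<lambda>y. N b y * H y)" for b
    unfolding N_def using shift_integrable[of b H] intH[of b] by simp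
  have hbI: "has_bochner_integral lborel (\<lambda>y. N b y * H y) (I b)" for b
    unfolding I_def using has_bochner_integral_integrable[OF intN[of b]] .
  have hbN: "has_bochner_integral lborel (N b) 1" for b
    unfolding N_def using hb_nd[of b] by (simp add: N_def)
  have Ishift: "I b = (\<integral>z. phi z * H (b + z) \<partial>lborel)" for b
    unfolding I_def N_def by (rule shift_int)
  have Ineg: "I (-a) = I a"
  proof -
    have "I (-a) = (\<integral>y. N (-a) (-y) * H (-y) \<partial>lborel)"
      unfolding I_def by (rule reflect_int)
    also have "\<dots> = I a" unfolding I_def N_def nd_refl even ..
    finally show ?thesis .
  qed
  obtain c where c: "\<And>y. 0 \<le> (H y - c) * (N a y + N (-a) y - 2 * N 0 y)"
    using pair_pointwise[of H a, OF mono] unfolding N_def by blast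
  have hb: "has_bochner_integral lborel
      (\<lambda>y. (N a y * H y + N (-a) y * H y - 2 * (N 0 y * H y)) - (c * N a y + c * N (-a) y - 2 * (c * N 0 y)))
      ((I a + I (-a) - 2 * I 0) - (c * 1 + c * 1 - 2 * (c * 1)))"
    by (intro has_bochner_integral_diff has_bochner_integral_add has_bochner_integral_mult_right hbI hbN)
  have "0 \<le> (\<integral>y. (N a y * H y + N (-a) y * H y - 2 * (N 0 y * H y)) - (c * N a y + c * N (-a) y - 2 * (c * N 0 y)) \<partial>lborel)"
  proof (rule Bochner_Integration.integral_nonneg)
    fix y :: real
    have "(N a y * H y + N (-a) y * H y - 2 * (N 0 y * H y)) - (c * N a y + c * N (-a) y - 2 * (c * N 0 y))
        = (H y - c) * (N a y + N (-a) y - 2 * N 0 y)" by (simp add: algebra_simps)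
    then show "0 \<le> (N a y * H y + N (-a) y * H y - 2 * (N 0 y * H y)) - (c * N a y + c * N (-a) y - 2 * (c * N 0 y))"
      using c[of y] by simp
  qed
  also have "\<dots> = (I a + I (-a) - 2 * I 0) - (c * 1 + c * 1 - 2 * (c * 1))"
    using hb by (rule has_bochner_integral_integral_eq)
  finally have "I 0 \<le> I a" using Ineg by simp
  then show ?thesis using Ishift[of 0] Ishift[of a] by simp
qed

definition Fz :: "real \<Rightarrow> real \<Rightarrow> real" where "Fz \<tau> y = pos_part (y^2 - \<tau>)"
definition Gz :: "real \<Rightarrow> real \<Rightarrow> real" where "Gz \<tau> y = min (y^2) \<tau>"

lemma Fz_meas[measurable]: "Fz \<tau> \<in> borel_measurable borel"
  unfolding Fz_def[abs_def] pos_part_def by measurable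
lemma Gz_meas[measurable]: "Gz \<tau> \<in> borel_measurable borel"
  unfolding Gz_def[abs_def] by measurable

lemma FG: "Fz \<tau> y = y^2 - Gz \<tau> y"
  unfolding Fz_def Gz_def pos_part_def by auto

lemma Fz_nonneg: "0 \<le> Fz \<tau> y" unfolding Fz_def pos_part_def by auto
lemma Fz_le: "0 \<le> \<tau> \<Longrightarrow> Fz \<tau> y \<le> y^2" unfolding Fz_def pos_part_def by auto
lemma Gz_nonneg: "0 \<le> \<tau> \<Longrightarrow> 0 \<le> Gz \<tau> y" unfolding Gz_def by auto
lemma Gz_le: "Gz \<tau> y \<le> y^2" "Gz \<tau> y \<le> \<tau>" unfolding Gz_def by auto

lemma sq_mono_abs: "\<bar>y\<bar> \<le> \<bar>y'\<bar> \<Longrightarrow> y^2 \<le> (y'::real)^2"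
  by (metis abs_le_square_iff)

lemma Fz_even: "Fz \<tau> (-y) = Fz \<tau> y" unfolding Fz_def by simp
lemma Gz_even: "Gz \<tau> (-y) = Gz \<tau> y" unfolding Gz_def by simp
lemma Fz_mono: "\<bar>y\<bar> \<le> \<bar>y'\<bar> \<Longrightarrow> Fz \<tau> y \<le> Fz \<tau> y'"
  unfolding Fz_def pos_part_def using sq_mono_abs[of y y'] by auto
lemma Gz_mono: "\<bar>y\<bar> \<le> \<bar>y'\<bar> \<Longrightarrow> Gz \<tau> y \<le> Gz \<tau> y'"
  unfolding Gz_def using sq_mono_abs[of y y'] by auto

lemma z2_le: "(z::real)^2 \<le> 1 + z^4"
proof -
  have "0 \<le> (z^2 - 1)^2 + z^2 + 1" by simp
  moreover have "(z^2 - 1)^2 = z^4 - 2*z^2 + 1" by (simp add: power2_eq_square algebra_simps power4_eq_xxxx)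
  moreover have "z^4 = z^2 * z^2" by (simp add: power2_eq_square power4_eq_xxxx)
  ultimately show ?thesis by (smt (verit) zero_le_power2)
qed

lemma sq_bound: "(b + z::real)^2 \<le> (2*b^2 + 2) + 2 * z^4"
proof -
  have "0 \<le> (b - z)^2" by simp
  then have "(b + z)^2 \<le> 2*b^2 + 2*z^2" by (simp add: power2_eq_square algebra_simps)
  then show ?thesis using z2_le[of z] by linarith
qed

lemma quart_bound: "(b + z::real)^4 \<le> 8*b^4 + 8 * z^4"
proof -
  have "0 \<le> (b - z)^2" by simp
  then have h: "(b + z)^2 \<le> 2*b^2 + 2*z^2" by (simp add: power2_eq_square algebra_simps)
  have "(b+z)^4 = ((b+z)^2)^2" by simp
  also have "\<dots> \<le> (2*b^2 + 2*z^2)^2" using h by (intro power_mono) auto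
  also have "\<dots> \<le> 8*b^4 + 8 * z^4"
  proof -
    have "0 \<le> (b^2 - z^2)^2" by simp
    then show ?thesis by (simp add: power2_eq_square power4_eq_xxxx algebra_simps)
  qed
  finally show ?thesis .
qed

lemma int_sq: "integrable lborel (\<lambda>z. phi z * (b + z)^2)"
  by (rule phi_int_bound[where A="2*b^2+2" and B=2]) (use sq_bound in auto)

lemma int_Fz: "0 \<le> \<tau> \<Longrightarrow> integrable lborel (\<lambda>z. phi z * Fz \<tau> (b + z))"
proof (rule phi_int_bound[where A="2*b^2+2" and B=2])
  fix z assume "0 \<le> \<tau>"
  then show "\<bar>Fz \<tau> (b + z)\<bar> \<le> 2*b^2+2 + 2 * z^4"
    using sq_bound[of b z] Fz_nonneg[of \<tau> "b+z"] Fz_le[of \<tau> "b+z"] by simp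
qed simp

lemma int_Gz: "0 \<le> \<tau> \<Longrightarrow> integrable lborel (\<lambda>z. phi z * Gz \<tau> (b + z))"
proof (rule phi_int_bound[where A="2*b^2+2" and B=2])
  fix z assume "0 \<le> \<tau>"
  then show "\<bar>Gz \<tau> (b + z)\<bar> \<le> 2*b^2+2 + 2 * z^4"
    using sq_bound[of b z] Gz_nonneg[of \<tau> "b+z"] Gz_le(1)[of \<tau> "b+z"] by simp
qed simp

lemma int_Fz2: "0 \<le> \<tau> \<Longrightarrow> integrable lborel (\<lambda>z. phi z * (Fz \<tau> (b + z) - c)^2)"
proof (rule phi_int_bound[where A="2*c^2 + 16*b^4" and B=16])
  fix z assume "0 \<le> \<tau>"
  have "(Fz \<tau> (b + z) - c)^2 \<le> 2 * (Fz \<tau> (b + z))^2 + 2*c^2"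
  proof -
    have "0 \<le> (Fz \<tau> (b + z) + c)^2" by simp
    then show ?thesis by (simp add: power2_eq_square algebra_simps)
  qed
  also have "(Fz \<tau> (b + z))^2 \<le> ((b+z)^2)^2"
    using Fz_le[OF \<open>0 \<le> \<tau>\<close>] Fz_nonneg by (intro power_mono) auto
  also have "((b+z)^2)^2 = (b+z)^4" by simp
  finally show "\<bar>(Fz \<tau> (b + z) - c)^2\<bar> \<le> 2*c^2 + 16*b^4 + 16 * z^4"
    using quart_bound[of b z] by simp
qed simp

lemma mom_sq: "(\<integral>z. phi z * (b + z)^2 \<partial>lborel) = b^2 + 1"
proof -
  have "has_bochner_integral lborel (\<lambda>z. b^2 * (phi z * z^(2*0)) + (2*b) * (phi z * z^(2*0+1)) + phi z * z^(2*1))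
     (b^2 * (fact (2 * 0) / (2^0 * fact 0)) + (2*b) * 0 + fact (2 * 1) / (2^1 * fact 1))"
    by (intro has_bochner_integral_add has_bochner_integral_mult_right std_normal_moment_even std_normal_moment_odd)
  moreover have "(\<lambda>z. b^2 * (phi z * z^(2*0)) + (2*b) * (phi z * z^(2*0+1)) + phi z * z^(2*1)) = (\<lambda>z. phi z * (b + z)^2)"
    by (auto simp: power2_eq_square algebra_simps)
  ultimately show ?thesis by (simp add: has_bochner_integral_iff)
qed

lemma mom_A: "(\<integral>z. phi z * (z * (2*a + z))^2 \<partial>lborel) = 4*a^2 + 3"
proof -
  have "has_bochner_integral lborel (\<lambda>z. (4*a^2) * (phi z * z^(2*1)) + (4*a) * (phi z * z^(2*1+1)) + phi z * z^(2*2))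
     ((4*a^2) * (fact (2 * 1) / (2^1 * fact 1)) + (4*a) * 0 + fact (2 * 2) / (2^2 * fact 2))"
    by (intro has_bochner_integral_add has_bochner_integral_mult_right std_normal_moment_even std_normal_moment_odd)
  moreover have "(\<lambda>z. (4*a^2) * (phi z * z^(2*1)) + (4*a) * (phi z * z^(2*1+1)) + phi z * z^(2*2)) = (\<lambda>z. phi z * (z * (2*a + z))^2)"
    by (auto simp: power2_eq_square power4_eq_xxxx algebra_simps)
  ultimately show ?thesis by (simp add: has_bochner_integral_iff fact_numeral)
qed

lemma int_phi_const: "integrable lborel (\<lambda>z. phi z * c)"
  by simp

lemma EF_formula:
  assumes "0 \<le> \<tau>"
  shows "(\<integral>z. phi z * Fz \<tau> (b + z) \<partial>lborel) = b^2 + 1 - (\<integral>z. phi z * Gz \<tau> (b + z) \<partial>lborel)"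
proof -
  have "(\<integral>z. phi z * Fz \<tau> (b + z) \<partial>lborel) = (\<integral>z. phi z * (b + z)^2 - phi z * Gz \<tau> (b + z) \<partial>lborel)"
    by (simp add: FG algebra_simps)
  also have "\<dots> = (\<integral>z. phi z * (b + z)^2 \<partial>lborel) - (\<integral>z. phi z * Gz \<tau> (b + z) \<partial>lborel)"
    by (rule Bochner_Integration.integral_diff[OF int_sq int_Gz[OF assms]])
  finally show ?thesis by (simp add: mom_sq)
qed

lemma EG_bounds:
  assumes "0 \<le> \<tau>"
  shows "0 \<le> (\<integral>z. phi z * Gz \<tau> (b + z) \<partial>lborel)" "(\<integral>z. phi z * Gz \<tau> (b + z) \<partial>lborel) \<le> \<tau>"
proof -
  show "0 \<le> (\<integral>z. phi z * Gz \<tau> (b + z) \<partial>lborel)"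
    by (rule Bochner_Integration.integral_nonneg) (simp add: Gz_nonneg[OF assms])
  have "(\<integral>z. phi z * Gz \<tau> (b + z) \<partial>lborel) \<le> (\<integral>z. phi z * \<tau> \<partial>lborel)"
    by (rule integral_mono[OF int_Gz[OF assms] int_phi_const]) (simp add: Gz_le mult_left_mono)
  also have "\<dots> = \<tau>" by simp
  finally show "(\<integral>z. phi z * Gz \<tau> (b + z) \<partial>lborel) \<le> \<tau>" .
qed

lemma bias_z:
  fixes a :: real
  assumes tau: "0 \<le> \<tau>"
  defines "g \<equiv> (\<integral>z. phi z * Fz \<tau> (a + z) \<partial>lborel)"
    and "m0 \<equiv> (\<integral>z. phi z * Fz \<tau> z \<partial>lborel)"
  shows "- min (a^2) \<tau> \<le> g - m0 - a^2" "g - m0 - a^2 \<le> 0"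
proof -
  have gF: "g = a^2 + 1 - (\<integral>z. phi z * Gz \<tau> (a + z) \<partial>lborel)"
    unfolding g_def by (rule EF_formula[OF tau])
  have mF: "m0 = 0^2 + 1 - (\<integral>z. phi z * Gz \<tau> (0 + z) \<partial>lborel)"
    unfolding m0_def using EF_formula[OF tau, of 0] by simp
  have pG: "(\<integral>z. phi z * Gz \<tau> z \<partial>lborel) \<le> (\<integral>z. phi z * Gz \<tau> (a + z) \<partial>lborel)"
    by (rule pairing) (auto simp: Gz_even Gz_mono int_Gz[OF tau])
  have pF: "m0 \<le> g"
    unfolding m0_def g_def
    by (rule pairing) (auto simp: Fz_even Fz_mono int_Fz[OF tau])
  have b1: "(\<integral>z. phi z * Gz \<tau> (a + z) \<partial>lborel) \<le> \<tau>" "0 \<le> (\<integral>z. phi z * Gz \<tau> z \<partial>lborel)"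
    using EG_bounds[OF tau, of a] EG_bounds[OF tau, of 0] by auto
  show "g - m0 - a^2 \<le> 0" using gF mF pG by simp
  show "- min (a^2) \<tau> \<le> g - m0 - a^2" using gF mF pF b1 by (simp add: min_def)
qed

lemma var_shift:
  fixes X :: "real \<Rightarrow> real"
  assumes i1: "integrable lborel (\<lambda>z. phi z * X z)"
    and i2: "\<And>c. integrable lborel (\<lambda>z. phi z * (X z - c)^2)"
  defines "g \<equiv> (\<integral>z. phi z * X z \<partial>lborel)"
  shows "(\<integral>z. phi z * (X z - g)^2 \<partial>lborel) \<le> (\<integral>z. phi z * (X z - c)^2 \<partial>lborel)"
proof -
  have i3: "integrable lborel (\<lambda>z. (2*(g-c)) * (phi z * X z - g * phi z))"
    using i1 by auto
  have i4: "integrable lborel (\<lambda>z. (g-c)^2 * phi z)" by simp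
  have "(\<integral>z. phi z * (X z - c)^2 \<partial>lborel) =
     (\<integral>z. phi z * (X z - g)^2 + ((2*(g-c)) * (phi z * X z - g * phi z) + (g-c)^2 * phi z) \<partial>lborel)"
    by (intro Bochner_Integration.integral_cong) (auto simp: power2_eq_square algebra_simps)
  also have "\<dots> = (\<integral>z. phi z * (X z - g)^2 \<partial>lborel) + ((2*(g-c)) * ((\<integral>z. phi z * X z \<partial>lborel) - g * (\<integral>z. phi z \<partial>lborel)) + (g-c)^2 * (\<integral>z. phi z \<partial>lborel))"
    using i1 i2[of g] i3 i4 by (simp add: integral_add integral_diff)
  also have "\<dots> = (\<integral>z. phi z * (X z - g)^2 \<partial>lborel) + (g-c)^2"
    unfolding g_def by simp
  finally show ?thesis by simp
qed

lemma FTC_atLeast: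
  fixes f F :: "real \<Rightarrow> real"
  assumes f_borel[measurable]: "f \<in> borel_measurable borel"
  assumes f: "\<And>x. a \<le> x \<Longrightarrow> DERIV F x :> f x"
  assumes nonneg: "\<And>x. a \<le> x \<Longrightarrow> 0 \<le> f x"
  assumes lim: "(F \<longlongrightarrow> T) at_top"
  shows "has_bochner_integral lborel (\<lambda>x. indicator {a..} x * f x) (T - F a)"
proof -
  have F_mono: "a \<le> x \<Longrightarrow> x \<le> y \<Longrightarrow> F x \<le> F y" for x y
    using f nonneg by (intro DERIV_nonneg_imp_nondecreasing[of x y F]) (auto intro: order_trans)
  then have F_le_T: "F a \<le> T"
    by (intro tendsto_lowerbound[OF lim]) (auto simp: eventually_at_top_linorder)
  have "(\<integral>\<^sup>+x. ennreal (indicator {a..} x * f x) \<partial>lborel) = (\<integral>\<^sup>+x. ennreal (f x) * indicator {a..} x \<partial>lborel)"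
    by (intro nn_integral_cong) (auto split: split_indicator)
  also have "\<dots> = ennreal (T - F a)"
    by (rule nn_integral_FTC_atLeast[OF f_borel f nonneg lim])
  finally show ?thesis
    by (intro has_bochner_integral_nn_integral) (auto simp: F_le_T nonneg split: split_indicator)
qed

definition k1 :: "real \<Rightarrow> real \<Rightarrow> real" where
  "k1 t z = phi z * (z^2 - t^2 + 3*(t^2 - 1) / z^4)"
definition h1 :: "real \<Rightarrow> real \<Rightarrow> real" where
  "h1 t z = z + (1 - t^2) / z + (t^2 - 1) / z^3"

lemma k1_meas[measurable]: "k1 t \<in> borel_measurable borel"
  unfolding k1_def[abs_def] by measurable

lemma expq_deriv: "((\<lambda>z. exp (- z\<^sup>2 / 2)) has_real_derivative (exp (- z\<^sup>2 / 2) * (-z))) (at z)"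
  by (auto intro!: derivative_eq_intros)

lemma k1_deriv:
  assumes "0 < z"
  shows "((\<lambda>z. - (phi z * h1 t z)) has_real_derivative k1 t z) (at z)"
proof -
  have dH: "(h1 t has_real_derivative (1 - (1 - t^2)/z^2 - 3*(t^2-1)/z^4)) (at z)"
    unfolding h1_def[abs_def]
    using assms by (auto intro!: derivative_eq_intros simp: field_simps power2_eq_square power3_eq_cube power4_eq_xxxx)
  have d: "((\<lambda>z. - ((1 / sqrt (2 * pi)) * (exp (- z\<^sup>2 / 2) * h1 t z))) has_real_derivative
      - ((1 / sqrt (2 * pi)) * (exp (- z\<^sup>2 / 2) * (-z) * h1 t z + (1 - (1 - t^2)/z^2 - 3*(t^2-1)/z^4) * exp (- z\<^sup>2 / 2)))) (at z)"
    by (intro DERIV_minus DERIV_cmult DERIV_mult expq_deriv dH)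
  have key: "z * h1 t z - (1 - (1 - t^2)/z^2 - 3*(t^2-1)/z^4) = z^2 - t^2 + 3*(t^2 - 1) / z^4"
    using assms unfolding h1_def by (simp add: field_simps power2_eq_square power3_eq_cube power4_eq_xxxx)
  have "- ((1 / sqrt (2 * pi)) * (exp (- z\<^sup>2 / 2) * (-z) * h1 t z + (1 - (1 - t^2)/z^2 - 3*(t^2-1)/z^4) * exp (- z\<^sup>2 / 2)))
     = (1 / sqrt (2 * pi)) * exp (- z\<^sup>2 / 2) * (z * h1 t z - (1 - (1 - t^2)/z^2 - 3*(t^2-1)/z^4))"
  proof -
    have gen: "\<And>c E H H'::real. - (c * (E * (-z) * H + H' * E)) = c * E * (z * H - H')"
      by (simp add: algebra_simps)
    show ?thesis by (rule gen)
  qed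
  also have "\<dots> = k1 t z" unfolding key k1_def std_normal_density_def ..
  finally show ?thesis using d unfolding std_normal_density_def by (simp add: mult.assoc)
qed

lemma k1_lim: "((\<lambda>z. - (phi z * h1 t z)) \<longlongrightarrow> 0) at_top"
  unfolding h1_def std_normal_density_def by real_asymp

lemma k1_nonneg: "1 \<le> t \<Longrightarrow> t \<le> z \<Longrightarrow> 0 \<le> k1 t z"
proof -
  assume "1 \<le> t" "t \<le> z"
  then have "t^2 \<le> z^2" by (intro power_mono) auto
  moreover have "0 \<le> 3*(t^2 - 1) / z^4" using \<open>1 \<le> t\<close> by (simp add: one_le_power)
  ultimately show ?thesis unfolding k1_def by simp
qed

lemma k1_int:
  assumes "1 \<le> t"
  shows "has_bochner_integral lborel (\<lambda>z. indicator {t..} z * k1 t z) (phi t * (2/t - 1/t^3))"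
proof -
  have "has_bochner_integral lborel (\<lambda>z. indicator {t..} z * k1 t z) (0 - (- (phi t * h1 t t)))"
    by (rule FTC_atLeast[OF k1_meas k1_deriv k1_nonneg[OF assms] k1_lim]) (use assms in auto)
  moreover have "h1 t t = 2/t - 1/t^3" unfolding h1_def using assms
    by (simp add: field_simps power2_eq_square power3_eq_cube)
  ultimately show ?thesis by simp
qed

lemma m0_bound:
  assumes "1 \<le> t"
  shows "(\<integral>z. phi z * Fz (t^2) z \<partial>lborel) \<le> 4 * phi t / t"
proof -
  define K where "K = (\<lambda>z. indicator {t..} z * k1 t z)"
  have hK: "has_bochner_integral lborel K (phi t * (2/t - 1/t^3))" unfolding K_def by (rule k1_int[OF assms])
  have iK: "integrable lborel K" using hK by (simp add: has_bochner_integral_iff)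
  have iK': "integrable lborel (\<lambda>z. K (-z))" using iK reflect_integrable by blast
  have vK': "(\<integral>z. K (-z) \<partial>lborel) = phi t * (2/t - 1/t^3)"
    using hK reflect_int[of K] by (simp add: has_bochner_integral_iff)
  have pw: "phi z * Fz (t^2) z \<le> K z + K (-z)" for z
  proof -
    have Kn: "0 \<le> K y" for y unfolding K_def using k1_nonneg[OF assms] by (auto split: split_indicator)
    show ?thesis
    proof (cases "t \<le> z")
      case True
      then have "t^2 \<le> z^2" using assms by (intro power_mono) auto
      then have "phi z * Fz (t^2) z = phi z * (z^2 - t^2)" unfolding Fz_def pos_part_def by simp
      also have "\<dots> \<le> k1 t z" unfolding k1_def using assms
        by (intro mult_left_mono) (auto simp: one_le_power)
      also have "\<dots> = K z" unfolding K_def using True by simp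
      finally show ?thesis using Kn[of "-z"] by simp
    next
      case False
      show ?thesis
      proof (cases "z \<le> -t")
        case True
        then have "t^2 \<le> (-z)^2" using assms by (intro power_mono) auto
        then have "phi z * Fz (t^2) z = phi (-z) * ((-z)^2 - t^2)" unfolding Fz_def pos_part_def
          by (simp add: std_normal_density_def)
        also have "\<dots> \<le> k1 t (-z)" unfolding k1_def using assms
          by (intro mult_left_mono) (auto simp: one_le_power)
        also have "\<dots> = K (-z)" unfolding K_def using True by simp
        finally show ?thesis using Kn[of z] by simp
      next
        case False
        with \<open>\<not> t \<le> z\<close> have "\<bar>z\<bar> < t" by auto
        then have "z^2 < t^2" using power_strict_mono[of "\<bar>z\<bar>" t 2] by simp
        then have "Fz (t^2) z = 0" unfolding Fz_def pos_part_def by simp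
        then show ?thesis using Kn[of z] Kn[of "-z"] by simp
      qed
    qed
  qed
  have "(\<integral>z. phi z * Fz (t^2) z \<partial>lborel) \<le> (\<integral>z. K z + K (-z) \<partial>lborel)"
    using Bochner_Integration.integral_mono[OF _ Bochner_Integration.integrable_add[OF iK iK'] pw] int_Fz[of "t^2" 0] by simp
  also have "\<dots> = 2 * (phi t * (2/t - 1/t^3))"
    using iK iK' vK' hK by (simp add: has_bochner_integral_iff)
  also have "\<dots> \<le> 4 * phi t / t"
    using assms by (simp add: field_simps)
  finally show ?thesis .
qed

definition k2 :: "real \<Rightarrow> real \<Rightarrow> real" where
  "k2 t y = exp (- (t * y)) * (y^2 - t^2)^2"
definition R2 :: "real \<Rightarrow> real \<Rightarrow> real" where
  "R2 t y = (y^2 - t^2)^2 / t + (4*y^3 - 4*t^2*y) / t^2 + (12*y^2 - 4*t^2) / t^3 + (24*y) / t^4 + 24 / t^5"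
definition J2 :: "real \<Rightarrow> real" where "J2 t = 8/t + 24/t^3 + 24/t^5"

lemma pow5: "(t::real)^5 = t*(t*(t*(t*t)))" by (simp add: eval_nat_numeral)

lemma k2_meas[measurable]: "k2 t \<in> borel_measurable borel"
  unfolding k2_def[abs_def] by measurable

lemma k2_nonneg: "0 \<le> k2 t y" unfolding k2_def by simp

lemma k2_deriv:
  assumes "0 < t"
  shows "((\<lambda>y. - (exp (- (t * y)) * R2 t y)) has_real_derivative k2 t y) (at y)"
proof -
  have dE: "((\<lambda>y. exp (- (t * y))) has_real_derivative (exp (- (t * y)) * (- t))) (at y)"
    by (auto intro!: derivative_eq_intros)
  have dR: "(R2 t has_real_derivative ((4*y^3 - 4*t^2*y) / t + (12*y^2 - 4*t^2) / t^2 + (24*y) / t^3 + 24 / t^4)) (at y)"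
    unfolding R2_def[abs_def]
    using assms by (auto intro!: derivative_eq_intros simp: field_simps power2_eq_square power3_eq_cube power4_eq_xxxx)
  have d: "((\<lambda>y. - (exp (- (t * y)) * R2 t y)) has_real_derivative
      - (exp (- (t * y)) * (- t) * R2 t y + ((4*y^3 - 4*t^2*y) / t + (12*y^2 - 4*t^2) / t^2 + (24*y) / t^3 + 24 / t^4) * exp (- (t * y)))) (at y)"
    by (intro DERIV_minus DERIV_mult dE dR)
  have key: "t * R2 t y - ((4*y^3 - 4*t^2*y) / t + (12*y^2 - 4*t^2) / t^2 + (24*y) / t^3 + 24 / t^4) = (y^2 - t^2)^2"
    using assms unfolding R2_def by (simp add: field_simps power2_eq_square power3_eq_cube power4_eq_xxxx pow5)
  have gen: "\<And>E R R'::real. - (E * (- t) * R + R' * E) = E * (t * R - R')"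
    by (simp add: algebra_simps)
  show ?thesis using d unfolding gen key k2_def .
qed

lemma k2_lim: "0 < t \<Longrightarrow> ((\<lambda>y. - (exp (- (t * y)) * R2 t y)) \<longlongrightarrow> 0) at_top"
  unfolding R2_def by real_asymp

lemma k2_int:
  assumes "1 \<le> t"
  shows "has_bochner_integral lborel (\<lambda>y. indicator {t..} y * k2 t y) (exp (-(t^2)) * J2 t)"
proof -
  have "has_bochner_integral lborel (\<lambda>y. indicator {t..} y * k2 t y) (0 - (- (exp (- (t * t)) * R2 t t)))"
    by (rule FTC_atLeast[OF k2_meas k2_deriv k2_nonneg k2_lim]) (use assms in auto)
  moreover have "R2 t t = J2 t" unfolding R2_def J2_def using assms
    by (simp add: field_simps power2_eq_square power3_eq_cube power4_eq_xxxx pow5)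
  ultimately show ?thesis by (simp add: power2_eq_square)
qed

lemma nd_bound: "normal_density a 1 y \<le> phi 0 * exp (t^2/2) * exp (t*a) * exp (-(t*y))"
proof -
  have "-((y-a)^2)/2 \<le> t*a + t^2/2 - t*y"
  proof -
    have "0 \<le> (y-a-t)^2" by simp
    then show ?thesis by (simp add: power2_eq_square field_simps; linarith)
  qed
  then have "exp (-((y-a)^2)/2) \<le> exp (t*a + t^2/2 - t*y)" by simp
  also have "\<dots> = exp (t^2/2) * exp (t*a) * exp (-(t*y))"
    by (simp add: exp_add[symmetric] exp_diff[symmetric] algebra_simps)
  finally have "exp (-((y-a)^2)/2) \<le> exp (t^2/2) * exp (t*a) * exp (-(t*y))" .
  then show ?thesis unfolding normal_density_def std_normal_density_def
    by (simp add: mult.assoc divide_right_mono)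
qed

lemma F2_tail:
  assumes t1: "1 \<le> t"
  shows "(\<integral>z. phi z * (Fz (t^2) (a + z))^2 \<partial>lborel) \<le> 2 * phi 0 * cosh (t*a) * exp (-(t^2)/2) * J2 t"
proof -
  define K where "K = (\<lambda>y. indicator {t..} y * k2 t y)"
  define V where "V = exp (-(t^2)) * J2 t"
  have hK: "has_bochner_integral lborel K V" unfolding K_def V_def by (rule k2_int[OF t1])
  have iK: "integrable lborel K" using hK by (simp add: has_bochner_integral_iff)
  have iK': "integrable lborel (\<lambda>z. K (-z))" using iK reflect_integrable by blast
  have vK: "(\<integral>z. K z \<partial>lborel) = V" using hK by (simp add: has_bochner_integral_iff)
  have vK': "(\<integral>z. K (-z) \<partial>lborel) = V" using hK reflect_int[of K] by (simp add: has_bochner_integral_iff)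
  have Kn: "0 \<le> K y" for y unfolding K_def using k2_nonneg by (auto split: split_indicator)
  define C where "C = phi 0 * exp (t^2/2)"
  have Cn: "0 \<le> C" unfolding C_def by simp
  have pw: "normal_density a 1 y * (Fz (t^2) y)^2 \<le> C * exp (t*a) * K y + C * exp (-(t*a)) * K (-y)" for y
  proof (cases "t \<le> y")
    case True
    then have "t^2 \<le> y^2" using t1 by (intro power_mono) auto
    then have F: "Fz (t^2) y = y^2 - t^2" unfolding Fz_def pos_part_def by simp
    have "normal_density a 1 y * (Fz (t^2) y)^2 \<le> (phi 0 * exp (t^2/2) * exp (t*a) * exp (-(t*y))) * (y^2 - t^2)^2"
      unfolding F by (intro mult_right_mono nd_bound) auto
    also have "\<dots> = C * exp (t*a) * K y" unfolding C_def K_def k2_def using True by simp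
    finally show ?thesis using Kn[of "-y"] Cn by (simp add: add_increasing2)
  next
    case False
    show ?thesis
    proof (cases "y \<le> -t")
      case True
      then have "t^2 \<le> (-y)^2" using t1 by (intro power_mono) auto
      then have F: "Fz (t^2) y = (-y)^2 - t^2" unfolding Fz_def pos_part_def by simp
      have "normal_density a 1 y = normal_density (-a) 1 (-y)" by (simp add: nd_refl)
      also have "\<dots> \<le> phi 0 * exp (t^2/2) * exp (t*(-a)) * exp (-(t*(-y)))" by (rule nd_bound)
      finally have nb: "normal_density a 1 y \<le> phi 0 * exp (t^2/2) * exp (t*(-a)) * exp (-(t*(-y)))" .
      have "normal_density a 1 y * (Fz (t^2) y)^2 \<le> (phi 0 * exp (t^2/2) * exp (t*(-a)) * exp (-(t*(-y)))) * ((-y)^2 - t^2)^2"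
        unfolding F by (intro mult_right_mono nb) auto
      also have "\<dots> = C * exp (-(t*a)) * K (-y)" unfolding C_def K_def k2_def using True by simp
      finally show ?thesis using Kn[of y] Cn by (simp add: add_increasing)
    next
      case False
      with \<open>\<not> t \<le> y\<close> have "\<bar>y\<bar> < t" by auto
      then have "y^2 < t^2" using power_strict_mono[of "\<bar>y\<bar>" t 2] by simp
      then have "Fz (t^2) y = 0" unfolding Fz_def pos_part_def by simp
      then show ?thesis using Kn[of y] Kn[of "-y"] Cn by simp
    qed
  qed
  have iL: "integrable lborel (\<lambda>y. normal_density a 1 y * (Fz (t^2) y)^2)"
    using shift_integrable[of a "\<lambda>y. (Fz (t^2) y)^2"] int_Fz2[of "t^2" a 0] by simp
  have iR: "integrable lborel (\<lambda>y. C * exp (t*a) * K y + C * exp (-(t*a)) * K (-y))"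
    using iK iK' by simp
  have "(\<integral>z. phi z * (Fz (t^2) (a + z))^2 \<partial>lborel) = (\<integral>y. normal_density a 1 y * (Fz (t^2) y)^2 \<partial>lborel)"
    by (rule shift_int[symmetric])
  also have "\<dots> \<le> (\<integral>y. C * exp (t*a) * K y + C * exp (-(t*a)) * K (-y) \<partial>lborel)"
    by (rule Bochner_Integration.integral_mono[OF iL iR pw])
  also have "\<dots> = C * exp (t*a) * V + C * exp (-(t*a)) * V"
    using iK iK' vK vK' by simp
  also have "\<dots> = 2 * phi 0 * cosh (t*a) * exp (-(t^2)/2) * J2 t"
  proof -
    have "exp (t^2/2) * exp (-(t^2)) = exp (-(t^2)/2)" by (simp add: exp_add[symmetric])
    then show ?thesis unfolding C_def V_def cosh_def
      by (simp add: algebra_simps)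
  qed
  finally show ?thesis .
qed

lemma cosh_quad:
  fixes x X :: real
  assumes "0 \<le> x" "x \<le> X" "0 < X"
  shows "cosh x - 1 \<le> (x/X)^2 * (cosh X - 1)"
proof -
  define u where "u = (\<lambda>y::real. \<lambda>n. (if even n then y^n / fact n else 0) - (if n = 0 then 1 else 0))"
  have su: "u y sums (cosh y - 1)" for y
  proof -
    have "(\<lambda>n. if even n then y ^ n /\<^sub>R fact n else 0) sums cosh y" by (rule cosh_converges)
    moreover have "(\<lambda>n. if even n then y ^ n /\<^sub>R fact n else 0) = (\<lambda>n. if even n then y^n / fact n else 0)"
      by (rule ext) (simp add: field_simps)
    ultimately have "(\<lambda>n. if even n then y^n / fact n else 0) sums cosh y" by simp
    from sums_diff[OF this sums_single[of 0 "\<lambda>_. 1::real"]] show ?thesis unfolding u_def by simp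
  qed
  have le: "u x n \<le> (x/X)^2 * u X n" for n
  proof (cases "even n \<and> n \<noteq> 0")
    case True
    then have "n \<noteq> 0" "n \<noteq> 1" by auto
    then have "2 \<le> n" by linarith
    define m where "m = n - 2"
    have m: "n = Suc (Suc m)" unfolding m_def using \<open>2 \<le> n\<close> by simp
    have "x^n = x^2 * x^m" unfolding m by (simp add: power2_eq_square)
    also have "\<dots> \<le> x^2 * X^m" using assms by (intro mult_left_mono power_mono) auto
    also have "\<dots> = (x/X)^2 * X^n"
    proof -
      have "X^n = X^2 * X^m" unfolding m by (simp add: power2_eq_square)
      moreover have "(x/X)^2 * X^2 = x^2" using assms by (simp add: power_divide)
      ultimately show ?thesis by (simp add: mult.assoc[symmetric])
    qed
    finally have "x^n / fact n \<le> (x/X)^2 * X^n / fact n" by (intro divide_right_mono) auto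
    then show ?thesis unfolding u_def using True by simp
  next
    case False
    then show ?thesis unfolding u_def by (cases "n = 0") simp_all
  qed
  show ?thesis by (rule sums_le[OF le su sums_mult[OF su]])
qed
lemma lin_aux: "(B::real) \<le> 1 \<Longrightarrow> C = (A + B) / 2 \<Longrightarrow> C - 1 \<le> A / 2" by (simp add: field_simps)

lemma phi0_bound: "2 * phi 0 \<le> 4/5"
proof -
  have "3.14 \<le> pi" using pi_approx(1) by simp
  then have "(5/2)^2 \<le> 2 * pi" by (simp add: power2_eq_square)
  then have "5/2 \<le> sqrt (2 * pi)" by (rule real_le_rsqrt)
  then show ?thesis unfolding std_normal_density_def by (simp add: field_simps)
qed

lemma caseC:
  fixes t a :: real
  assumes t3: "3 \<le> t^2" and t1: "1 \<le> t" and a2: "a^2 \<le> 3/2"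
  shows "2 * phi 0 * cosh (t*a) * exp (-(t^2)/2) * J2 t \<le> 6*a^2 + (4*t+18) * exp (-(t^2)/2)"
proof -
  define E where "E = exp (-(t^2)/2)"
  define s where "s = sqrt (3/2::real)"
  have E0: "0 < E" unfolding E_def by simp
  have s0: "0 < s" and s2: "s^2 = 3/2" unfolding s_def by auto
  have tge: "1.732 \<le> t"
  proof (rule ccontr)
    assume "\<not> 1.732 \<le> t"
    then have "t^2 < 1.732^2" using t1 by (intro power_strict_mono) auto
    then show False using t3 by (simp add: power2_eq_square)
  qed
  have sle: "s \<le> 1.2248" unfolding s_def by (rule real_le_lsqrt) (auto simp: power2_eq_square)
  have J0: "0 \<le> J2 t" unfolding J2_def using t1 by simp
  have Jb: "J2 t \<le> 56 / (3*t)"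
  proof -
    have t4: "9 \<le> t^4" using t3 power_mono[OF t3, of 2] by (simp add: power_mult[symmetric])
    have "24 / t^3 \<le> 8 / t" using t1 t3 by (simp add: field_simps power3_eq_cube power2_eq_square)
    moreover have "24 / t^5 \<le> 8 / (3*t)" using t1 t4 by (simp add: field_simps pow5 power4_eq_xxxx)
    ultimately have "J2 t \<le> 8/t + 8/t + 8/(3*t)" unfolding J2_def by linarith
    also have "8/t + 8/t + 8/(3*t) = 56/(3*t)" using t1 by (simp add: field_simps)
    finally show ?thesis .
  qed
  have ch: "cosh (t*a) \<le> 1 + a^2 * exp (t * s) / 3"
  proof -
    have "\<bar>a\<bar> \<le> s" unfolding s_def using a2 by (simp add: real_le_rsqrt)
    then have x: "t * \<bar>a\<bar> \<le> t * s" using t1 by (intro mult_left_mono) auto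
    have "cosh (t*a) = cosh (t * \<bar>a\<bar>)" by (metis abs_mult abs_of_nonneg cosh_real_abs t1 order_trans zero_le_one)
    also have "\<dots> \<le> 1 + ((t * \<bar>a\<bar>)/(t * s))^2 * (cosh (t * s) - 1)"
      using cosh_quad[of "t*\<bar>a\<bar>" "t * s"] x t1 s0 by simp
    also have "((t * \<bar>a\<bar>)/(t * s))^2 = a^2 / (3/2)"
    proof -
      have "((t * \<bar>a\<bar>)/(t * s))^2 = a^2 / s^2" using t1 by (simp add: power_divide power_mult_distrib)
      then show ?thesis using s2 by simp
    qed
    also have "cosh (t * s) - 1 \<le> exp (t * s) / 2"
    proof -
      have "exp (-(t * s)) \<le> 1" using t1 s0 by simp
      moreover have "cosh (t * s) = (exp (t * s) + exp (-(t * s))) / 2" by (simp add: cosh_def field_simps)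
      ultimately show ?thesis by (rule lin_aux)
    qed
    then have "1 + a^2 / (3/2) * (cosh (t * s) - 1) \<le> 1 + a^2 / (3/2) * (exp (t * s) / 2)"
      by (intro add_left_mono mult_left_mono) auto
    finally show ?thesis by (simp add: ac_simps)
  qed
  have expb: "exp (t * s) * E \<le> 2.015625"
  proof -
    have "t - s \<ge> 0.5" using tge sle by simp
    then have "0.5^2 \<le> (t-s)^2" by (intro power_mono) auto
    then have "0.25 \<le> (t-s)^2" by (simp add: power2_eq_square)
    then have "t * s - t^2/2 \<le> 0.625" using s2 by (simp add: power2_eq_square algebra_simps)
    then have "exp (t * s - t^2/2) \<le> exp 0.625" by simp
    also have "\<dots> \<le> 1 + 0.625 + 0.625^2" by (rule exp_bound) auto
    finally have "exp (t * s - t^2/2) \<le> 1 + 0.625 + 0.625^2" .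
    then have "exp (t * s - t^2/2) \<le> 2.015625" by (simp add: power2_eq_square)
    moreover have "exp (t * s) * E = exp (t * s - t^2/2)"
    proof -
      have "t * s - t^2/2 = t * s + (-(t^2)/2)" by simp
      then show ?thesis unfolding E_def by (simp only: exp_add)
    qed
    ultimately show ?thesis by simp
  qed
  have "2 * phi 0 * cosh (t*a) * E * J2 t \<le> (4/5) * (1 + a^2 * exp (t * s) / 3) * E * (56 / (3*t))"
    using phi0_bound ch Jb J0 E0 by (intro mult_mono mult_nonneg_nonneg) auto
  also have "\<dots> = (224 / (15 * t)) * E + (224 / (45 * t)) * a^2 * (exp (t * s) * E)"
    using t1 by (simp add: field_simps)
  also have "(224 / (15 * t)) * E \<le> (4*t+18) * E"
  proof -
    have "224 / (15 * t) \<le> 224 / 15" using t1 by (simp add: field_simps)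
    then have "224 / (15 * t) \<le> 4*t+18" using t1 by simp
    then show ?thesis using E0 by (intro mult_right_mono) auto
  qed
  also have "(224 / (45 * t)) * a^2 * (exp (t * s) * E) \<le> (224 / (45 * 1.732)) * a^2 * 2.015625"
    using expb tge E0 by (intro mult_mono) (auto simp: field_simps)
  also have "\<dots> \<le> 6 * a^2" by simp
  finally show ?thesis unfolding E_def by simp
qed

lemma caseA:
  fixes t a :: real
  assumes t1: "1 \<le> t" and c: "3/2 \<le> a^2 \<or> t^2 \<le> 3"
  shows "4*a^2 + 3 \<le> 6*a^2 + (4*t+18) * exp (-(t^2)/2)"
proof (cases "3/2 \<le> a^2")
  case True
  have "0 \<le> (4*t+18) * exp (-(t^2)/2)" using t1 by simp
  then show ?thesis using True by simp
next
  case False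
  then have t3: "t^2 \<le> 3" using c by simp
  have "exp (1/2::real) \<le> 1 + 1/2 + (1/2)^2" by (rule exp_bound) auto
  then have h1: "exp (1/2::real) \<le> 1.75" by (simp add: power2_eq_square)
  have h2: "exp (1::real) \<le> 2.72" using e_less_272 by simp
  have "exp (3/2::real) = exp (1 + 1/2)" by simp
  also have "\<dots> = exp 1 * exp (1/2)" by (rule exp_add)
  also have "\<dots> \<le> 2.72 * 1.75" by (rule mult_mono[OF h2 h1]) auto
  finally have "exp (3/2::real) \<le> 2.72 * 1.75" .
  then have e32: "exp (3/2::real) \<le> 22/3" by simp
  have "exp (-(3/2)::real) \<le> exp (-(t^2)/2)" using t3 by simp
  moreover have "3/22 \<le> exp (-(3/2)::real)"
    using e32 by (simp add: exp_minus field_simps)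
  ultimately have "3/22 \<le> exp (-(t^2)/2)" by linarith
  then have "3 \<le> 22 * exp (-(t^2)/2)" by simp
  also have "\<dots> \<le> (4*t+18) * exp (-(t^2)/2)" using t1 by (intro mult_right_mono) auto
  finally have "3 \<le> (4*t+18) * exp (-(t^2)/2)" .
  then show ?thesis using zero_le_power2[of a] by linarith
qed

lemma pos_part_lip: "\<bar>pos_part u - pos_part v\<bar> \<le> \<bar>u - v\<bar>"
  unfolding pos_part_def by auto

lemma pos_part_div: "0 < n \<Longrightarrow> pos_part (u / n) = pos_part u / n"
  unfolding pos_part_def by (auto simp: max_def field_simps)

lemma hb_A: "has_bochner_integral lborel (\<lambda>z. phi z * (z * (2*a + z))^2) (4*a^2 + 3)"
proof -
  have "has_bochner_integral lborel (\<lambda>z. (4*a^2) * (phi z * z^(2*1)) + (4*a) * (phi z * z^(2*1+1)) + phi z * z^(2*2))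
     ((4*a^2) * (fact (2 * 1) / (2^1 * fact 1)) + (4*a) * 0 + fact (2 * 2) / (2^2 * fact 2))"
    by (intro has_bochner_integral_add has_bochner_integral_mult_right std_normal_moment_even std_normal_moment_odd)
  moreover have "(\<lambda>z. (4*a^2) * (phi z * z^(2*1)) + (4*a) * (phi z * z^(2*1+1)) + phi z * z^(2*2)) = (\<lambda>z. phi z * (z * (2*a + z))^2)"
    by (auto simp: power2_eq_square power4_eq_xxxx algebra_simps)
  moreover have "((4*a^2) * (fact (2 * 1) / (2^1 * fact 1)) + (4*a) * 0 + fact (2 * 2) / (2^2 * fact 2)) = (4*a^2 + 3::real)"
    by (simp add: fact_numeral)
  ultimately show ?thesis by simp
qed

lemma var_z:
  fixes t a :: real
  assumes t1: "1 \<le> t"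
  shows "(\<integral>z. phi z * (Fz (t^2) (a + z) - (\<integral>y. phi y * Fz (t^2) (a + y) \<partial>lborel))^2 \<partial>lborel)
     \<le> 6*a^2 + (4*t+18) * exp (-(t^2)/2)"
proof -
  have tau0: "0 \<le> t^2" by simp
  note vs = var_shift[of "\<lambda>z. Fz (t^2) (a + z)", OF int_Fz[OF tau0] int_Fz2[OF tau0]]
  show ?thesis
  proof (cases "3/2 \<le> a^2 \<or> t^2 \<le> 3")
    case True
    have pw: "phi z * (Fz (t^2) (a + z) - Fz (t^2) a)^2 \<le> phi z * (z * (2*a + z))^2" for z
    proof -
      have "\<bar>Fz (t^2) (a + z) - Fz (t^2) a\<bar> \<le> \<bar>((a+z)^2 - t^2) - (a^2 - t^2)\<bar>"
        unfolding Fz_def by (rule pos_part_lip)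
      also have "((a+z)^2 - t^2) - (a^2 - t^2) = z * (2*a + z)" by (simp add: power2_eq_square algebra_simps)
      finally have "(Fz (t^2) (a + z) - Fz (t^2) a)^2 \<le> (z * (2*a + z))^2"
        by (simp add: abs_le_square_iff)
      then show ?thesis by (intro mult_left_mono) auto
    qed
    have iA: "integrable lborel (\<lambda>z. phi z * (z * (2*a + z))^2)" using hb_A[of a] by (simp add: has_bochner_integral_iff)
    have "(\<integral>z. phi z * (Fz (t^2) (a + z) - Fz (t^2) a)^2 \<partial>lborel) \<le> (\<integral>z. phi z * (z * (2*a + z))^2 \<partial>lborel)"
      by (rule Bochner_Integration.integral_mono[OF int_Fz2[OF tau0] iA pw])
    also have "\<dots> = 4*a^2 + 3" using hb_A[of a] by (simp add: has_bochner_integral_iff)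
    also have "\<dots> \<le> 6*a^2 + (4*t+18) * exp (-(t^2)/2)" by (rule caseA[OF t1 True])
    finally show ?thesis using vs[of "Fz (t^2) a"] by linarith
  next
    case False
    then have t3: "3 \<le> t^2" and a2: "a^2 \<le> 3/2" by auto
    have "(\<integral>z. phi z * (Fz (t^2) (a + z) - 0)^2 \<partial>lborel) \<le> 2 * phi 0 * cosh (t*a) * exp (-(t^2)/2) * J2 t"
      using F2_tail[OF t1, of a] by simp
    also have "\<dots> \<le> 6*a^2 + (4*t+18) * exp (-(t^2)/2)" by (rule caseC[OF t3 t1 a2])
    finally show ?thesis using vs[of 0] by linarith
  qed
qed

lemma nd_affine: "0 < \<sigma> \<Longrightarrow> normal_density \<theta> \<sigma> (\<theta> + \<sigma> * z) = phi z / \<sigma>"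
  unfolding normal_density_def std_normal_density_def
  by (simp add: real_sqrt_mult power_mult_distrib field_simps)

lemma transfer:
  fixes h :: "real \<Rightarrow> real"
  assumes n: "0 < n" and [measurable]: "h \<in> borel_measurable borel"
  shows "(\<integral>x. h x \<partial>normal_law \<theta> n) = (\<integral>z. phi z * h (\<theta> + z / sqrt n) \<partial>lborel)"
proof -
  define \<sigma> where "\<sigma> = 1 / sqrt n"
  have s0: "0 < \<sigma>" unfolding \<sigma>_def using n by simp
  have "(\<integral>x. h x \<partial>normal_law \<theta> n) = (\<integral>x. normal_density \<theta> \<sigma> x * h x \<partial>lborel)"
    unfolding normal_law_def \<sigma>_def by (subst integral_density) auto
  also have "\<dots> = \<bar>\<sigma>\<bar> * (\<integral>z. normal_density \<theta> \<sigma> (\<theta> + \<sigma> * z) * h (\<theta> + \<sigma> * z) \<partial>lborel)"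
    using lborel_integral_real_affine[of \<sigma> "\<lambda>x. normal_density \<theta> \<sigma> x * h x" \<theta>] s0 by simp
  also have "\<dots> = (\<integral>z. phi z * h (\<theta> + \<sigma> * z) \<partial>lborel)"
    using s0 by (simp add: nd_affine)
  also have "\<dots> = (\<integral>z. phi z * h (\<theta> + z / sqrt n) \<partial>lborel)"
    unfolding \<sigma>_def by simp
  finally show ?thesis .
qed

theorem lemma1:
  fixes n \<tau> \<theta> \<mu>0 :: real and Q :: "real \<Rightarrow> real"
  assumes "n > 0" and "\<tau> \<ge> 1"
    and mu0_def: "\<mu>0 = (\<integral>x. pos_part (x\<^sup>2 - \<tau> / n) \<partial>normal_law 0 n)"
    and Q_def: "\<And>x. Q x = pos_part (x\<^sup>2 - \<tau> / n) - \<mu>0"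
  shows "\<bar>\<mu>0\<bar> \<le> 4 / (sqrt (2 * pi) * n * sqrt \<tau> * exp (\<tau> / 2)) \<and>
      \<bar>(\<integral>x. Q x \<partial>normal_law \<theta> n) - \<theta>\<^sup>2\<bar> \<le> min (2 * \<tau> / n) (\<theta>\<^sup>2) \<and>
      (\<integral>x. (Q x - (\<integral>y. Q y \<partial>normal_law \<theta> n))\<^sup>2 \<partial>normal_law \<theta> n)
           \<le> 6 * \<theta>\<^sup>2 / n + (4 * sqrt \<tau> + 18) / (n\<^sup>2 * exp (\<tau> / 2))"
proof -
  have n0: "0 < n" using assms(1) .
  have tau1: "1 \<le> \<tau>" using assms(2) .
  define t where "t = sqrt \<tau>"
  have t1: "1 \<le> t" unfolding t_def using tau1 by simp
  have tt: "t^2 = \<tau>" unfolding t_def using tau1 by simp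
  define a where "a = \<theta> * sqrt n"
  have sn: "0 < sqrt n" "(sqrt n)^2 = n" using n0 by auto
  define P where "P = (\<lambda>x::real. pos_part (x\<^sup>2 - \<tau> / n))"
  have P_meas[measurable]: "P \<in> borel_measurable borel" unfolding P_def pos_part_def by measurable
  have keyP: "P (b + z / sqrt n) = Fz (t^2) (b * sqrt n + z) / n" for b z
  proof -
    have "(b + z / sqrt n)\<^sup>2 - \<tau> / n = ((b * sqrt n + z)^2 - \<tau>) / n"
      using sn by (simp add: power2_eq_square field_simps)
    then show ?thesis unfolding P_def Fz_def tt using pos_part_div[OF n0] by simp
  qed
  have Qeq: "Q = (\<lambda>x. P x - \<mu>0)" unfolding P_def using Q_def by auto
  define m0 where "m0 = (\<integral>z. phi z * Fz (t^2) z \<partial>lborel)"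
  define g where "g = (\<integral>z. phi z * Fz (t^2) (a + z) \<partial>lborel)"
  define V where "V = (\<integral>z. phi z * (Fz (t^2) (a + z) - g)^2 \<partial>lborel)"
  have tau0: "0 \<le> t^2" by simp
  have iF: "integrable lborel (\<lambda>z. phi z * Fz (t^2) (a + z))" by (rule int_Fz[OF tau0])
  have mu: "\<mu>0 = m0 / n"
  proof -
    have "\<mu>0 = (\<integral>x. P x \<partial>normal_law 0 n)" unfolding mu0_def P_def ..
    also have "\<dots> = (\<integral>z. phi z * P (0 + z / sqrt n) \<partial>lborel)" by (rule transfer[OF n0 P_meas])
    also have "\<dots> = (\<integral>z. (phi z * Fz (t^2) z) / n \<partial>lborel)" unfolding keyP by simp
    also have "\<dots> = m0 / n" unfolding m0_def by simp
    finally show ?thesis .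
  qed
  have EQ: "(\<integral>x. Q x \<partial>normal_law \<theta> n) = g / n - \<mu>0"
  proof -
    have "(\<integral>x. Q x \<partial>normal_law \<theta> n) = (\<integral>z. phi z * (P (\<theta> + z / sqrt n) - \<mu>0) \<partial>lborel)"
      unfolding Qeq by (rule transfer[OF n0]) simp
    also have "\<dots> = (\<integral>z. (phi z * Fz (t^2) (a + z)) / n - \<mu>0 * phi z \<partial>lborel)"
      unfolding keyP a_def by (simp add: algebra_simps)
    also have "\<dots> = (\<integral>z. (phi z * Fz (t^2) (a + z)) / n \<partial>lborel) - (\<integral>z. \<mu>0 * phi z \<partial>lborel)"
      by (rule Bochner_Integration.integral_diff) (use iF in auto)
    also have "\<dots> = g / n - \<mu>0" unfolding g_def by simp
    finally show ?thesis .
  qed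
  have VAR: "(\<integral>x. (Q x - (\<integral>y. Q y \<partial>normal_law \<theta> n))\<^sup>2 \<partial>normal_law \<theta> n) = V / n^2"
  proof -
    have "(\<integral>x. (Q x - (\<integral>y. Q y \<partial>normal_law \<theta> n))\<^sup>2 \<partial>normal_law \<theta> n)
        = (\<integral>x. (P x - \<mu>0 - (g / n - \<mu>0))\<^sup>2 \<partial>normal_law \<theta> n)" unfolding EQ unfolding Qeq ..
    also have "\<dots> = (\<integral>z. phi z * (P (\<theta> + z / sqrt n) - \<mu>0 - (g / n - \<mu>0))\<^sup>2 \<partial>lborel)"
      by (rule transfer[OF n0]) simp
    also have "\<dots> = (\<integral>z. (phi z * (Fz (t^2) (a + z) - g)^2) / n^2 \<partial>lborel)"
      unfolding keyP a_def using n0 by (simp add: power2_eq_square field_simps)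
    also have "\<dots> = V / n^2" unfolding V_def by simp
    finally show ?thesis .
  qed
  have m0n: "0 \<le> m0" unfolding m0_def
    by (rule Bochner_Integration.integral_nonneg) (simp add: Fz_nonneg)
  have m0b: "m0 \<le> 4 * phi t / t" unfolding m0_def by (rule m0_bound[OF t1])
  have part1: "\<bar>\<mu>0\<bar> \<le> 4 / (sqrt (2 * pi) * n * sqrt \<tau> * exp (\<tau> / 2))"
  proof -
    have "\<bar>\<mu>0\<bar> = m0 / n" using mu m0n n0 by simp
    also have "\<dots> \<le> (4 * phi t / t) / n" using n0 by (intro divide_right_mono[OF m0b]) simp
    also have "\<dots> = 4 / (sqrt (2 * pi) * n * sqrt \<tau> * exp (\<tau> / 2))"
      unfolding std_normal_density_def t_def[symmetric] using tt t1 n0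
      by (simp add: exp_minus field_simps)
    finally show ?thesis .
  qed
  have bz: "- min (a^2) (t^2) \<le> g - m0 - a^2" "g - m0 - a^2 \<le> 0"
    unfolding g_def m0_def using bias_z[OF tau0, of a] by auto
  have a2: "a^2 / n = \<theta>\<^sup>2" unfolding a_def using sn n0 by (simp add: power_mult_distrib)
  have part2: "\<bar>(\<integral>x. Q x \<partial>normal_law \<theta> n) - \<theta>\<^sup>2\<bar> \<le> min (2 * \<tau> / n) (\<theta>\<^sup>2)"
  proof -
    have e: "(\<integral>x. Q x \<partial>normal_law \<theta> n) - \<theta>\<^sup>2 = (g - m0 - a^2) / n"
      unfolding EQ mu a2[symmetric] by (simp add: diff_divide_distrib)
    have "\<bar>(g - m0 - a^2) / n\<bar> = \<bar>g - m0 - a^2\<bar> / n" using n0 by simp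
    also have "\<dots> \<le> min (a^2) (t^2) / n" using bz n0 by (intro divide_right_mono) auto
    also have "\<dots> \<le> min (2 * \<tau> / n) (\<theta>\<^sup>2)"
    proof -
      have "min (a^2) (t^2) / n \<le> a^2 / n" using n0 by (intro divide_right_mono) auto
      moreover have "min (a^2) (t^2) / n \<le> t^2 / n" using n0 by (intro divide_right_mono) auto
      moreover have "t^2 / n \<le> 2 * \<tau> / n" using tt tau1 n0 by (simp add: divide_right_mono)
      ultimately show ?thesis using a2 by simp
    qed
    finally show ?thesis using e by simp
  qed
  have part3: "V / n^2 \<le> 6 * \<theta>\<^sup>2 / n + (4 * sqrt \<tau> + 18) / (n\<^sup>2 * exp (\<tau> / 2))"
  proof -
    have "V \<le> 6*a^2 + (4*t+18) * exp (-(t^2)/2)" unfolding V_def g_def by (rule var_z[OF t1])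
    then have "V / n^2 \<le> (6*a^2 + (4*t+18) * exp (-(t^2)/2)) / n^2" using n0 by (simp add: divide_right_mono)
    also have "\<dots> = 6 * \<theta>\<^sup>2 / n + (4 * sqrt \<tau> + 18) / (n\<^sup>2 * exp (\<tau> / 2))"
    proof -
      have "6*a^2 / n^2 = 6 * \<theta>\<^sup>2 / n" using a2 n0 by (simp add: power2_eq_square field_simps)
      moreover have "(4*t+18) * exp (-(t^2)/2) / n^2 = (4 * sqrt \<tau> + 18) / (n\<^sup>2 * exp (\<tau> / 2))"
        unfolding tt t_def[symmetric] by (simp add: exp_minus field_simps)
      ultimately show ?thesis by (simp add: add_divide_distrib)
    qed
    finally show ?thesis .
  qed
  show ?thesis using part1 part2 part3 VAR by simp
qed

end
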